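(* Let $Y$ be a set. The Lie subring of $A[Y]$ (with bracket $[a,b]=ab-ba$) generated by $Y$ identifies with $R\mathfrak L[Y]$; that is, the Lie ring morphism $R\mathfrak L[Y]\to A[Y]$ sending each $y\in Y$ to $y$ is injective.
   Context: For $s\geq2$, $\Delta_s(Y)=\{(y_1,\dots,y_s)\in Y^s: y_i=y_j\text{ for some }i\neq j\}$. The reduced free algebra $A[Y]$ is the unital associative ring generated by $Y$ subject to $y_1\cdots y_s=0$ for all $s$ and all $(y_i)\in\Delta_s(Y)$. The reduced free Lie ring $R\mathfrak L[Y]$ is the Lie ring (Lie algebra over $\mathbb Z$) generated by $Y$ subject to $[y_1,[y_2,[\cdots[y_{s-1},y_s]\cdots]]]=0$ for all $s$ and all $(y_i)\in\Delta_s(Y)$. *)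

theory Defs
  imports Main
begin

datatype 'a rterm = RVar 'a | RZero | ROne | RAdd "'a rterm" "'a rterm"
  | RNeg "'a rterm" | RMul "'a rterm" "'a rterm"

datatype 'a lterm = LVar 'a | LZero | LAdd "'a lterm" "'a lterm"
  | LNeg "'a lterm" | LBr "'a lterm" "'a lterm"

fun rvars :: "'a rterm \<Rightarrow> 'a set" where
  "rvars (RVar y) = {y}"
| "rvars RZero = {}"
| "rvars ROne = {}"
| "rvars (RAdd a b) = rvars a \<union> rvars b"
| "rvars (RNeg a) = rvars a"
| "rvars (RMul a b) = rvars a \<union> rvars b"

fun lvars :: "'a lterm \<Rightarrow> 'a set" where
  "lvars (LVar y) = {y}"
| "lvars LZero = {}"
| "lvars (LAdd a b) = lvars a \<union> lvars b"
| "lvars (LNeg a) = lvars a"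
| "lvars (LBr a b) = lvars a \<union> lvars b"

definition Delta :: "nat \<Rightarrow> 'a set \<Rightarrow> 'a list set" where
  "Delta s Y = {ys. length ys = s \<and> set ys \<subseteq> Y \<and>
     (\<exists>i j. i < s \<and> j < s \<and> i \<noteq> j \<and> ys ! i = ys ! j)}"

fun rprod :: "'a list \<Rightarrow> 'a rterm" where
  "rprod [] = ROne"
| "rprod (y # ys) = RMul (RVar y) (rprod ys)"

fun lbr_list :: "'a list \<Rightarrow> 'a lterm" where
  "lbr_list [] = LZero"
| "lbr_list [y] = LVar y"
| "lbr_list (y # ys) = LBr (LVar y) (lbr_list ys)"

text \<open>Equality in A[Y]: the least congruence on ring terms containing the unital
  ring axioms and the relations y_1...y_s = 0 for (y_i) in Delta_s(Y), s >= 2.\<close>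
inductive ring_eq :: "'a set \<Rightarrow> 'a rterm \<Rightarrow> 'a rterm \<Rightarrow> bool" for Y where
  r_refl: "ring_eq Y a a"
| r_sym: "ring_eq Y a b \<Longrightarrow> ring_eq Y b a"
| r_trans: "ring_eq Y a b \<Longrightarrow> ring_eq Y b c \<Longrightarrow> ring_eq Y a c"
| r_add_cong: "ring_eq Y a a' \<Longrightarrow> ring_eq Y b b' \<Longrightarrow> ring_eq Y (RAdd a b) (RAdd a' b')"
| r_neg_cong: "ring_eq Y a a' \<Longrightarrow> ring_eq Y (RNeg a) (RNeg a')"
| r_mul_cong: "ring_eq Y a a' \<Longrightarrow> ring_eq Y b b' \<Longrightarrow> ring_eq Y (RMul a b) (RMul a' b')"
| r_add_assoc: "ring_eq Y (RAdd (RAdd a b) c) (RAdd a (RAdd b c))"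
| r_add_comm: "ring_eq Y (RAdd a b) (RAdd b a)"
| r_add_zero: "ring_eq Y (RAdd a RZero) a"
| r_add_neg: "ring_eq Y (RAdd a (RNeg a)) RZero"
| r_mul_assoc: "ring_eq Y (RMul (RMul a b) c) (RMul a (RMul b c))"
| r_mul_one_l: "ring_eq Y (RMul ROne a) a"
| r_mul_one_r: "ring_eq Y (RMul a ROne) a"
| r_distl: "ring_eq Y (RMul a (RAdd b c)) (RAdd (RMul a b) (RMul a c))"
| r_distr: "ring_eq Y (RMul (RAdd a b) c) (RAdd (RMul a c) (RMul b c))"
| r_rel: "2 \<le> s \<Longrightarrow> ys \<in> Delta s Y \<Longrightarrow> ring_eq Y (rprod ys) RZero"

text \<open>Equality in the reduced free Lie ring RL[Y]: the least congruence on Lie terms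
  containing the Lie ring axioms and the relations [y_1,[y_2,[...,y_s]]] = 0
  for (y_i) in Delta_s(Y), s >= 2.\<close>
inductive lie_eq :: "'a set \<Rightarrow> 'a lterm \<Rightarrow> 'a lterm \<Rightarrow> bool" for Y where
  l_refl: "lie_eq Y a a"
| l_sym: "lie_eq Y a b \<Longrightarrow> lie_eq Y b a"
| l_trans: "lie_eq Y a b \<Longrightarrow> lie_eq Y b c \<Longrightarrow> lie_eq Y a c"
| l_add_cong: "lie_eq Y a a' \<Longrightarrow> lie_eq Y b b' \<Longrightarrow> lie_eq Y (LAdd a b) (LAdd a' b')"
| l_neg_cong: "lie_eq Y a a' \<Longrightarrow> lie_eq Y (LNeg a) (LNeg a')"
| l_br_cong: "lie_eq Y a a' \<Longrightarrow> lie_eq Y b b' \<Longrightarrow> lie_eq Y (LBr a b) (LBr a' b')"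
| l_add_assoc: "lie_eq Y (LAdd (LAdd a b) c) (LAdd a (LAdd b c))"
| l_add_comm: "lie_eq Y (LAdd a b) (LAdd b a)"
| l_add_zero: "lie_eq Y (LAdd a LZero) a"
| l_add_neg: "lie_eq Y (LAdd a (LNeg a)) LZero"
| l_br_addl: "lie_eq Y (LBr (LAdd a b) c) (LAdd (LBr a c) (LBr b c))"
| l_br_addr: "lie_eq Y (LBr a (LAdd b c)) (LAdd (LBr a b) (LBr a c))"
| l_alt: "lie_eq Y (LBr a a) LZero"
| l_jacobi: "lie_eq Y (LAdd (LBr a (LBr b c)) (LAdd (LBr b (LBr c a)) (LBr c (LBr a b)))) LZero"
| l_rel: "2 \<le> s \<Longrightarrow> ys \<in> Delta s Y \<Longrightarrow> lie_eq Y (lbr_list ys) LZero"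

fun lie_to_ring :: "'a lterm \<Rightarrow> 'a rterm" where
  "lie_to_ring (LVar y) = RVar y"
| "lie_to_ring LZero = RZero"
| "lie_to_ring (LAdd a b) = RAdd (lie_to_ring a) (lie_to_ring b)"
| "lie_to_ring (LNeg a) = RNeg (lie_to_ring a)"
| "lie_to_ring (LBr a b) =
     RAdd (RMul (lie_to_ring a) (lie_to_ring b)) (RNeg (RMul (lie_to_ring b) (lie_to_ring a)))"

end

theory Submission
  imports Defs "HOL-Library.Function_Algebras" "HOL-Library.Multiset"
begin

section \<open>Operator semantics of ring terms\<close>

fun Lop :: "'a rterm \<Rightarrow> ('a list \<Rightarrow> int) \<Rightarrow> ('a list \<Rightarrow> int)" where
  "Lop (RVar y) g = (\<lambda>w. if distinct w \<and> w \<noteq> [] \<and> hd w = y then g (tl w) else 0)"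
| "Lop RZero g = 0"
| "Lop ROne g = g"
| "Lop (RAdd a b) g = Lop a g + Lop b g"
| "Lop (RNeg a) g = - Lop a g"
| "Lop (RMul a b) g = Lop a (Lop b g)"

lemma Lop_add[simp]: "Lop r (f + g) = Lop r f + Lop r g"
proof (induction r arbitrary: f g)
  case (RVar y) then show ?case by (auto simp: fun_eq_iff)
qed (simp_all add: algebra_simps)

lemma Lop_neg[simp]: "Lop r (- f) = - Lop r f"
proof (induction r arbitrary: f)
  case (RVar y) then show ?case by (auto simp: fun_eq_iff)
qed simp_all

lemma Lop_zero[simp]: "Lop r 0 = 0"
proof (induction r)
  case (RVar y) then show ?case by (auto simp: fun_eq_iff)
qed simp_all

lemma Lop_diff[simp]: "Lop r (f - g) = Lop r f - Lop r g"
  using Lop_add[of r f "- g"] by simp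

lemma Lop_sum_list: "Lop r (sum_list (map f xs)) = sum_list (map (\<lambda>x. Lop r (f x)) xs)"
  by (induction xs) (simp_all only: list.map sum_list_simps Lop_add Lop_zero)

definition wact :: "'a list \<Rightarrow> ('a list \<Rightarrow> int) \<Rightarrow> ('a list \<Rightarrow> int)" where
  "wact x g = foldr (\<lambda>a. Lop (RVar a)) x g"

lemma wact_Nil[simp]: "wact [] g = g" by (simp add: wact_def)
lemma wact_Cons[simp]: "wact (a # x) g = Lop (RVar a) (wact x g)" by (simp add: wact_def)
lemma wact_append: "wact (x @ y) g = wact x (wact y g)" by (simp add: wact_def)

lemma wact_formula:
  "wact (a # x) g w = (if distinct w \<and> take (length (a # x)) w = a # x then g (drop (length (a # x)) w) else 0)"
proof (induction x arbitrary: a w)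
  case Nil
  then show ?case by (cases w) auto
next
  case (Cons b x)
  then show ?case by (cases w) auto
qed

lemma wact_nondistinct: assumes "\<not> distinct x" shows "wact x g = 0"
proof (cases x)
  case (Cons a list)
  then show ?thesis using assms
    by (auto simp: fun_eq_iff wact_formula simp del: wact_Cons)
      (metis distinct.simps(2) distinct_take)+
qed (use assms in simp)

lemma Lop_rprod: "Lop (rprod ys) g = wact ys g"
  by (induction ys) auto

lemma Delta_nondistinct: "ys \<in> Delta s Y \<Longrightarrow> \<not> distinct ys"
  by (auto simp: Delta_def distinct_conv_nth)

lemma ring_sound: "ring_eq Y a b \<Longrightarrow> Lop a = Lop b"
proof (induction rule: ring_eq.induct)
  case (r_rel s ys)
  then show ?case by (auto simp: fun_eq_iff Lop_rprod wact_nondistinct Delta_nondistinct)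
next
  case (r_mul_cong a a' b b') then show ?case by (intro ext) simp
qed (simp_all add: fun_eq_iff algebra_simps)

section \<open>Expansion of right-normed brackets\<close>

fun lexp :: "'a list \<Rightarrow> (bool \<times> 'a list) list" where
  "lexp [] = []"
| "lexp [a] = [(True, [a])]"
| "lexp (a # b # v) = map (\<lambda>(s, y). (s, a # y)) (lexp (b # v))
     @ map (\<lambda>(s, y). (\<not> s, y @ [a])) (lexp (b # v))"

definition sg :: "bool \<Rightarrow> 'b::ab_group_add \<Rightarrow> 'b" where
  "sg s x = (if s then x else - x)"

lemma sg_simps[simp]: "sg True x = x" "sg False x = - x" "sg (\<not> s) x = - sg s x"
  by (auto simp: sg_def)

lemma sg_zero[simp]: "sg s 0 = 0" by (simp add: sg_def)
lemma sg_add: "sg s (x + y) = sg s x + sg s y" by (simp add: sg_def)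
lemma sg_neg: "sg s (- x) = - sg s x" by (simp add: sg_def)

lemma sum_list_neg_map: "sum_list (map (\<lambda>x. - (f x :: 'b::ab_group_add)) xs) = - sum_list (map f xs)"
  by (induction xs) simp_all

lemma sum_list_map_zero: "(\<And>x. x \<in> set xs \<Longrightarrow> f x = 0) \<Longrightarrow> sum_list (map f xs) = (0::'b::monoid_add)"
  by (induction xs) auto

lemma lexp_mset_all: "\<forall>(s, y) \<in> set (lexp v). mset y = mset v"
  by (induction v rule: lexp.induct) (auto simp: add.commute)

lemma lexp_mset: "(s, y) \<in> set (lexp v) \<Longrightarrow> mset y = mset v"
  using lexp_mset_all by fastforce

lemma Lop_sg[simp]: "Lop r (sg s f) = sg s (Lop r f)"
  by (simp add: sg_def)

lemma Lop_expand:
  "Lop (lie_to_ring (lbr_list v)) g = sum_list (map (\<lambda>(s, y). sg s (wact y g)) (lexp v))"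
proof (induction v arbitrary: g rule: lbr_list.induct)
  case (3 a b v)
  show ?case
    by (simp add: 3 Lop_sum_list o_def case_prod_beta wact_append sum_list_neg_map)
qed simp_all

lemma Lop_lbr_nondistinct:
  assumes "\<not> distinct v" shows "Lop (lie_to_ring (lbr_list v)) g = 0"
proof -
  have "\<And>s y. (s, y) \<in> set (lexp v) \<Longrightarrow> wact y g = 0"
  proof -
    fix s y assume "(s, y) \<in> set (lexp v)"
    then have "mset y = mset v" by (rule lexp_mset)
    then have "\<not> distinct y" using assms
      using mset_eq_imp_distinct_iff by blast
    then show "wact y g = 0" by (rule wact_nondistinct)
  qed
  then show ?thesis unfolding Lop_expand
    by (intro sum_list_map_zero) auto
qed

lemma lie_sound: "lie_eq Y a b \<Longrightarrow> Lop (lie_to_ring a) = Lop (lie_to_ring b)"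
proof (induction rule: lie_eq.induct)
  case (l_add_cong a a' b b') then show ?case by (intro ext) simp
next
  case (l_br_cong a a' b b') then show ?case by (intro ext) simp
next
  case (l_rel s ys)
  then show ?case by (intro ext) (simp add: Lop_lbr_nondistinct Delta_nondistinct)
qed (simp_all add: fun_eq_iff algebra_simps)

section \<open>The quotient Lie ring for Y = UNIV\<close>

quotient_type 'a RL = "'a lterm" / "lie_eq UNIV"
  by (auto intro!: equivpI reflpI sympI transpI intro: l_refl l_sym l_trans)

instantiation RL :: (type) ab_group_add
begin
lift_definition zero_RL :: "'a RL" is LZero .
lift_definition plus_RL :: "'a RL \<Rightarrow> 'a RL \<Rightarrow> 'a RL" is LAdd by (rule l_add_cong)
lift_definition uminus_RL :: "'a RL \<Rightarrow> 'a RL" is LNeg by (rule l_neg_cong)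
lift_definition minus_RL :: "'a RL \<Rightarrow> 'a RL \<Rightarrow> 'a RL" is "\<lambda>a b. LAdd a (LNeg b)"
  by (intro l_add_cong l_neg_cong)
instance
proof
  fix a b c :: "'a RL"
  show "a + b + c = a + (b + c)" by transfer (rule l_add_assoc)
  show "a + b = b + a" by transfer (rule l_add_comm)
  show "0 + a = a" by transfer (metis l_add_comm l_add_zero l_trans)
  show "- a + a = 0" by transfer (metis l_add_comm l_add_neg l_trans)
  show "a - b = a + - b" by transfer (rule l_refl)
qed
end

lift_definition br :: "'a RL \<Rightarrow> 'a RL \<Rightarrow> 'a RL" is LBr by (rule l_br_cong)
lift_definition var :: "'a \<Rightarrow> 'a RL" is LVar .
lift_definition rn :: "'a list \<Rightarrow> 'a RL" is lbr_list .
lift_definition lsem :: "'a RL \<Rightarrow> 'a list \<Rightarrow> int"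
  is "\<lambda>c. Lop (lie_to_ring c) (\<lambda>w. if w = [] then 1 else 0)"
  using lie_sound by metis

lemma br_addl: "br (x + y) z = br x z + br y z" by transfer (rule l_br_addl)
lemma br_addr: "br x (y + z) = br x y + br x z" by transfer (rule l_br_addr)
lemma br_self: "br x x = 0" by transfer (rule l_alt)
lemma br_jacobi: "br a (br b c) + (br b (br c a) + br c (br a b)) = 0"
  by transfer (rule l_jacobi)

lemma br_zero_l[simp]: "br 0 x = 0"
  using br_addl[of 0 0 x] by simp
lemma br_zero_r[simp]: "br x 0 = 0"
  using br_addr[of x 0 0] by simp
lemma br_neg_l: "br (- x) y = - br x y"
  using br_addl[of "- x" x y] by (simp add: eq_neg_iff_add_eq_0)
lemma br_neg_r: "br x (- y) = - br x y"
  using br_addr[of x "- y" y] by (simp add: eq_neg_iff_add_eq_0)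
lemma br_anti: "br x y = - br y x"
proof -
  have "br (x + y) (x + y) = (br x x + br x y) + (br y x + br y y)"
    by (simp only: br_addl br_addr ac_simps)
  then have "br x y + br y x = 0" by (simp add: br_self)
  then show ?thesis by (simp add: eq_neg_iff_add_eq_0)
qed

lemma br_sg_l: "br (sg s x) y = sg s (br x y)" by (simp add: sg_def br_neg_l)
lemma br_sg_r: "br x (sg s y) = sg s (br x y)" by (simp add: sg_def br_neg_r)

lemma br_sum_list_r: "br x (sum_list (map f xs)) = sum_list (map (\<lambda>a. br x (f a)) xs)"
  by (induction xs) (simp_all add: br_addr)
lemma br_sum_list_l: "br (sum_list (map f xs)) y = sum_list (map (\<lambda>a. br (f a) y) xs)"
  by (induction xs) (simp_all add: br_addl)

lemma br_br_l: "br (br a r) x = br a (br r x) - br r (br a x)"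
proof -
  have "br a (br r x) + (br r (br x a) + br x (br a r)) = 0" by (rule br_jacobi)
  moreover have "br x (br a r) = - br (br a r) x" by (rule br_anti)
  moreover have "br r (br x a) = - br r (br a x)" by (metis br_anti br_neg_r)
  ultimately show ?thesis by (simp add: algebra_simps eq_neg_iff_add_eq_0)
qed

lemma rn_Nil[simp]: "rn [] = 0" by transfer (simp add: l_refl)
lemma rn_single[simp]: "rn [a] = var a" by transfer (simp add: l_refl)
lemma rn_Cons2: "rn (a # b # v) = br (var a) (rn (b # v))" by transfer (simp add: l_refl)
lemma rn_Cons: "v \<noteq> [] \<Longrightarrow> rn (a # v) = br (var a) (rn v)"
  by (cases v) (simp_all add: rn_Cons2)

lemma rn_nondistinct: "\<not> distinct w \<Longrightarrow> rn w = 0"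
proof transfer
  fix w :: "'a list" assume nd: "\<not> distinct w"
  then have "length w \<ge> 2"
    by (cases w rule: remdups_adj.cases) auto
  moreover have "w \<in> Delta (length w) UNIV"
    using nd by (auto simp: Delta_def distinct_conv_nth)
  ultimately show "lie_eq UNIV (lbr_list w) LZero" by (rule l_rel)
qed

lemma lsem_add[simp]: "lsem (x + y) = lsem x + lsem y" by transfer simp
lemma lsem_neg[simp]: "lsem (- x) = - lsem x" by transfer simp
lemma lsem_zero[simp]: "lsem 0 = 0" by transfer simp
lemma lsem_sg[simp]: "lsem (sg s x) = sg s (lsem x)" by (simp add: sg_def)
lemma lsem_rn: "lsem (rn x) = Lop (lie_to_ring (lbr_list x)) (\<lambda>w. if w = [] then 1 else 0)"
  by transfer simp

definition V :: "(bool \<times> 'a list) list \<Rightarrow> 'a RL" where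
  "V L = sum_list (map (\<lambda>(s, w). sg s (rn w)) L)"

lemma V_Nil[simp]: "V [] = 0" by (simp add: V_def)
lemma V_Cons[simp]: "V ((s, w) # L) = sg s (rn w) + V L" by (simp add: V_def)
lemma V_append: "V (L @ M) = V L + V M" by (simp add: V_def)

definition flipL :: "(bool \<times> 'a list) list \<Rightarrow> (bool \<times> 'a list) list" where
  "flipL L = map (\<lambda>(s, w). (\<not> s, w)) L"

lemma V_flip: "V (flipL L) = - V L"
  by (induction L) (auto simp: flipL_def)

definition inV :: "'a RL \<Rightarrow> bool" where "inV X \<longleftrightarrow> (\<exists>L. X = V L)"

lemma inV_zero: "inV 0" unfolding inV_def by (metis V_Nil)
lemma inV_add: "inV X \<Longrightarrow> inV Y \<Longrightarrow> inV (X + Y)"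
  unfolding inV_def by (metis V_append)
lemma inV_neg: "inV X \<Longrightarrow> inV (- X)"
  unfolding inV_def by (metis V_flip)
lemma inV_sg: "inV X \<Longrightarrow> inV (sg s X)"
  by (cases s) (auto intro: inV_neg)
lemma inV_sum: "(\<And>x. x \<in> set xs \<Longrightarrow> inV (f x)) \<Longrightarrow> inV (sum_list (map f xs))"
  by (induction xs) (auto intro: inV_zero inV_add)
lemma inV_rn: "inV (rn w)"
  unfolding inV_def by (rule exI[of _ "[(True, w)]"]) simp

definition wbr :: "'a list \<Rightarrow> 'a RL \<Rightarrow> 'a RL" where
  "wbr x X = foldr (\<lambda>y X. br (var y) X) x X"

lemma wbr_Nil[simp]: "wbr [] X = X" by (simp add: wbr_def)
lemma wbr_Cons[simp]: "wbr (a # x) X = br (var a) (wbr x X)" by (simp add: wbr_def)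
lemma wbr_append: "wbr (x @ y) X = wbr x (wbr y X)" by (simp add: wbr_def)
lemma wbr_rn: "w \<noteq> [] \<Longrightarrow> wbr x (rn w) = rn (x @ w)"
  by (induction x) (simp_all add: rn_Cons)
lemma wbr_neg: "wbr x (- X) = - wbr x X"
  by (induction x) (simp_all add: br_neg_r)
lemma wbr_zero[simp]: "wbr x 0 = 0"
  by (induction x) simp_all
lemma wbr_add: "wbr x (X + Y) = wbr x X + wbr x Y"
  by (induction x) (simp_all add: br_addr)
lemma wbr_sg: "wbr x (sg s X) = sg s (wbr x X)"
  by (simp add: sg_def wbr_neg)
lemma wbr_sum_list: "wbr x (sum_list (map f xs)) = sum_list (map (\<lambda>a. wbr x (f a)) xs)"
  by (induction xs) (simp_all add: wbr_add)

lemma br_rn_expand: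
  "br (rn v) X = sum_list (map (\<lambda>(s, y). sg s (wbr y X)) (lexp v))"
proof (induction v arbitrary: X rule: lbr_list.induct)
  case (3 a b v)
  show ?case
    by (simp add: rn_Cons2 br_br_l 3 br_sum_list_r br_sg_r o_def case_prod_beta
        wbr_append sum_list_neg_map)
qed simp_all

lemma br_rn_rn: "inV (br (rn w) (rn x))"
proof (cases "x = []")
  case True then show ?thesis by (simp add: inV_zero)
next
  case False
  then have "br (rn w) (rn x) = sum_list (map (\<lambda>(s, y). sg s (rn (y @ x))) (lexp w))"
    by (simp add: br_rn_expand wbr_rn)
  then show ?thesis by (auto intro!: inV_sum inV_sg inV_rn)
qed

lemma inV_V: "inV (V L)" unfolding inV_def by blast

lemma br_rn_V: "inV (br (rn w) (V L2))"
proof (induction L2)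
  case Nil then show ?case by (simp add: inV_zero)
next
  case (Cons p L2) then show ?case
    by (cases p) (simp add: br_addr br_sg_r inV_add inV_sg br_rn_rn)
qed

lemma br_V_V: "inV (br (V L1) (V L2))"
proof (induction L1)
  case Nil then show ?case by (simp add: inV_zero)
next
  case (Cons p L1) then show ?case
    by (cases p) (simp add: br_addl br_sg_l inV_add inV_sg br_rn_V)
qed

lemma span: "inV (abs_RL c)"
proof (induction c)
  case (LVar y)
  then show ?case by (metis rn_single var.abs_eq inV_rn)
next
  case LZero
  then show ?case by (metis zero_RL.abs_eq inV_zero)
next
  case (LAdd c1 c2)
  then show ?case by (metis plus_RL.abs_eq inV_add)
next
  case (LNeg c)
  then show ?case by (metis uminus_RL.abs_eq inV_neg)
next
  case (LBr c1 c2)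
  then show ?case by (metis br.abs_eq br_V_V inV_def)
qed

section \<open>Normalisation: words ending with a chosen letter\<close>

definition zf :: "'a set \<Rightarrow> 'a" where "zf S = (SOME z. z \<in> S)"

definition normw :: "'a list \<Rightarrow> bool" where
  "normw x \<longleftrightarrow> distinct x \<and> x \<noteq> [] \<and> last x = zf (set x)"

definition inN :: "'a RL \<Rightarrow> bool" where
  "inN X \<longleftrightarrow> (\<exists>L. X = V L \<and> (\<forall>(s, x) \<in> set L. normw x))"

lemma inN_zero: "inN 0" unfolding inN_def by (rule exI[of _ "[]"]) simp
lemma inN_add: assumes "inN X" "inN Y" shows "inN (X + Y)"
proof -
  obtain L M where "X = V L" "\<forall>(s, x) \<in> set L. normw x" "Y = V M" "\<forall>(s, x) \<in> set M. normw x"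
    using assms unfolding inN_def by blast
  then show ?thesis unfolding inN_def by (intro exI[of _ "L @ M"]) (auto simp: V_append)
qed
lemma inN_neg: assumes "inN X" shows "inN (- X)"
proof -
  obtain L where "X = V L" "\<forall>(s, x) \<in> set L. normw x"
    using assms unfolding inN_def by blast
  then show ?thesis unfolding inN_def by (intro exI[of _ "flipL L"]) (auto simp: V_flip[symmetric], auto simp: flipL_def)
qed
lemma inN_sg: "inN X \<Longrightarrow> inN (sg s X)"
  by (cases s) (auto intro: inN_neg)

lemma rn_rewrite:
  assumes "z \<in> set w"
  shows "\<exists>L. rn w = V L \<and> (\<forall>(s, x) \<in> set L. mset x = mset w \<and> last x = z)"
proof -
  obtain u v where w: "w = u @ z # v" using assms by (metis split_list)
  show ?thesis
  proof (cases "v = []")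
    case True
    then show ?thesis using w by (intro exI[of _ "[(True, w)]"]) simp
  next
    case False
    define L where "L = map (\<lambda>(s, y). (\<not> s, u @ y @ [z])) (lexp v)"
    have "rn w = wbr u (rn (z # v))" using w by (simp add: wbr_rn)
    also have "rn (z # v) = - br (rn v) (var z)"
      using False by (simp add: rn_Cons br_anti[of "var z"])
    also have "br (rn v) (var z) = sum_list (map (\<lambda>(s, y). sg s (rn (y @ [z]))) (lexp v))"
      by (simp add: br_rn_expand wbr_rn[of "[z]", simplified])
    finally have "rn w = V L"
      by (simp add: L_def V_def wbr_neg wbr_sum_list wbr_sg wbr_rn o_def case_prod_beta
          sum_list_neg_map)
    moreover have "\<forall>(s, x) \<in> set L. mset x = mset w \<and> last x = z"
      using w by (auto simp: L_def dest!: lexp_mset)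
    ultimately show ?thesis by blast
  qed
qed

lemma inN_rn: "inN (rn w)"
proof (cases "distinct w \<and> w \<noteq> []")
  case False
  then show ?thesis by (auto simp: rn_nondistinct inN_zero)
next
  case True
  then have z: "zf (set w) \<in> set w" unfolding zf_def by (simp add: some_in_eq)
  obtain L where L: "rn w = V L" "\<forall>(s, x) \<in> set L. mset x = mset w \<and> last x = zf (set w)"
    using rn_rewrite[OF z] by blast
  have "\<forall>(s, x) \<in> set L. normw x"
  proof (intro ballI, clarify)
    fix s x assume "(s, x) \<in> set L"
    then have "mset x = mset w" "last x = zf (set w)" using L(2) by auto
    then show "normw x" using True unfolding normw_def
      by (metis mset_eq_imp_distinct_iff mset_eq_setD mset_zero_iff)
  qed
  then show ?thesis using L(1) unfolding inN_def by blast
qed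

lemma inN_V: "inN (V L)"
proof (induction L)
  case Nil then show ?case by (simp add: inN_zero)
next
  case (Cons p L) then show ?case by (cases p) (simp add: inN_add inN_sg inN_rn)
qed

lemma inN_inV: "inV X \<Longrightarrow> inN X"
  unfolding inV_def using inN_V by blast

section \<open>Coefficient extraction\<close>

lemma sum_list_fun_apply:
  "(sum_list (map f xs) :: 'c \<Rightarrow> 'b::monoid_add) u = sum_list (map (\<lambda>x. f x u) xs)"
  by (induction xs) simp_all

lemma sg_apply: "(sg s f) u = sg s (f u)"
  by (simp add: sg_def)

lemma wact_delta:
  "wact y (\<lambda>w. if w = [] then 1 else 0) u = (if distinct u \<and> u = y then 1 else 0)"
proof (cases y)
  case Nil then show ?thesis by auto
next
  case (Cons a y')
  have "(take (length y) u = y \<and> drop (length y) u = []) \<longleftrightarrow> u = y"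
    by (metis append_Nil2 append_eq_conv_conj)
  moreover have "wact y (\<lambda>w. if w = [] then 1 else 0) u = (if distinct u \<and> take (length y) u = y
      then (if drop (length y) u = [] then 1 else 0) else 0)"
    using Cons by (simp only: wact_formula)
  ultimately show ?thesis by auto
qed

lemma lexp_head:
  "distinct x \<Longrightarrow> x \<noteq> [] \<Longrightarrow>
   \<exists>rest. lexp x = (True, x) # rest \<and> (\<forall>(s, y) \<in> set rest. last y \<noteq> last x)"
proof (induction x rule: lbr_list.induct)
  case (2 a)
  then show ?case by simp
next
  case (3 a b v)
  then obtain R where R: "lexp (b # v) = (True, b # v) # R" "\<forall>(s, y) \<in> set R. last y \<noteq> last (b # v)"
    by auto
  define rest where "rest = map (\<lambda>(s, y). (s, a # y)) R @ map (\<lambda>(s, y). (\<not> s, y @ [a])) (lexp (b # v))"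
  have "lexp (a # b # v) = (True, a # b # v) # rest" by (simp add: rest_def R(1))
  moreover have "\<forall>(s, y) \<in> set rest. last y \<noteq> last (a # b # v)"
  proof (intro ballI, clarify)
    fix s y assume y: "(s, y) \<in> set rest" "last y = last (a # b # v)"
    show False
    proof (cases "(s, y) \<in> set (map (\<lambda>(s, y). (s, a # y)) R)")
      case True
      then obtain y' where y': "(s, y') \<in> set R" "y = a # y'" by auto
      then have "(s, y') \<in> set (lexp (b # v))" using R(1) by simp
      then have "y' \<noteq> []" using lexp_mset by fastforce
      then show False using y y' R(2) by auto
    next
      case False
      then obtain y' where "y = y' @ [a]" using y(1) unfolding rest_def by auto
      then have "last (b # v) = a" using y(2) by simp
      moreover have "last (b # v) \<in> set (b # v)" by (rule last_in_set) simp
      ultimately show False using "3.prems" by auto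
    qed
  qed
  ultimately show ?case by blast
qed simp

lemma lsem_rn_normw:
  assumes u: "normw u" and x: "normw x"
  shows "lsem (rn x) u = (if u = x then 1 else 0)"
proof -
  obtain rest where r: "lexp x = (True, x) # rest" "\<forall>(s, y) \<in> set rest. last y \<noteq> last x"
    using lexp_head x unfolding normw_def by blast
  have zero: "(case p of (s, y) \<Rightarrow> sg s (if distinct u \<and> u = y then 1 else 0)) = (0::int)"
    if p: "p \<in> set rest" for p
  proof (cases p)
    case (Pair s y)
    show ?thesis
    proof (cases "u = y")
      case True
      have "(s, y) \<in> set (lexp x)" using p Pair r(1) by simp
      then have "set y = set x" by (metis lexp_mset mset_eq_setD)
      then have "last u = last x" using True u x unfolding normw_def by simp
      then show ?thesis using True p Pair r(2) by auto
    qed (simp add: Pair)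
  qed
  have "lsem (rn x) u = sum_list (map (\<lambda>(s, y). sg s (if distinct u \<and> u = y then 1 else 0)) (lexp x))"
    by (simp add: lsem_rn Lop_expand sum_list_fun_apply sg_apply split_def wact_delta)
  also have "\<dots> = (if distinct u \<and> u = x then 1 else 0)"
    using zero by (simp add: r(1) sum_list_map_zero)
  finally show ?thesis using u unfolding normw_def by simp
qed

definition cntw :: "'a list \<Rightarrow> (bool \<times> 'a list) list \<Rightarrow> int" where
  "cntw u L = sum_list (map (\<lambda>(s, x). if x = u then sg s 1 else 0) L)"

lemma cntw_Nil[simp]: "cntw u [] = 0" by (simp add: cntw_def)
lemma cntw_Cons[simp]: "cntw u ((s, x) # L) = (if x = u then sg s 1 else 0) + cntw u L"
  by (simp add: cntw_def)

lemma lsem_V: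
  assumes "normw u" "\<forall>(s, x) \<in> set L. normw x"
  shows "lsem (V L) u = cntw u L"
  using assms(2)
proof (induction L)
  case (Cons p L)
  then show ?case
    by (cases p) (auto simp: sg_apply lsem_rn_normw[OF assms(1)] sg_def)
qed simp

lemma cntw_notin: "(\<forall>(s, x) \<in> set L. x \<noteq> u) \<Longrightarrow> cntw u L = 0"
  by (induction L) auto

lemma cntw_sign:
  assumes "(\<not> s, w) \<notin> set L"
  shows "sg s (1::int) * cntw w L \<ge> 0"
  using assms
proof (induction L)
  case (Cons p L)
  then show ?case by (cases p) (auto simp: sg_def distrib_left)
qed simp

lemma cntw_remove1:
  "(t, w) \<in> set L \<Longrightarrow> cntw u L = (if w = u then sg t 1 else 0) + cntw u (remove1 (t, w) L)"
  by (induction L) (auto simp: algebra_simps)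

lemma V_remove1:
  "(t, w) \<in> set L \<Longrightarrow> V L = sg t (rn w) + V (remove1 (t, w) L)"
  by (induction L) (auto simp: algebra_simps)

lemma cancel: "(\<forall>u. cntw u L = 0) \<Longrightarrow> V L = 0"
proof (induction "length L" arbitrary: L rule: less_induct)
  case less
  show ?case
  proof (cases L)
    case Nil then show ?thesis by simp
  next
    case (Cons p L')
    obtain s w where p: "p = (s, w)" by (cases p)
    have c: "sg s 1 + cntw w L' = 0" using less.prems[rule_format, of w] Cons p by simp
    have mem: "(\<not> s, w) \<in> set L'"
    proof (rule ccontr)
      assume "(\<not> s, w) \<notin> set L'"
      then have "sg s (1::int) * cntw w L' \<ge> 0" by (rule cntw_sign)
      moreover have "sg s (1::int) * (sg s 1 + cntw w L') = 0" using c by simp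
      ultimately show False by (cases s) auto
    qed
    define L'' where "L'' = remove1 (\<not> s, w) L'"
    have "\<forall>u. cntw u L'' = 0"
    proof
      fix u
      have "cntw u L = (if w = u then sg s 1 else 0) + ((if w = u then sg (\<not> s) 1 else 0) + cntw u L'')"
        using Cons p cntw_remove1[OF mem, of u] by (simp add: L''_def)
      then show "cntw u L'' = 0" using less.prems by (auto split: if_splits)
    qed
    moreover have "length L'' < length L" using Cons mem by (simp add: L''_def length_remove1)
    ultimately have "V L'' = 0" using less.hyps by blast
    moreover have "V L = sg s (rn w) + (sg (\<not> s) (rn w) + V L'')"
      using Cons p V_remove1[OF mem] by (simp add: L''_def)
    ultimately show ?thesis by simp
  qed
qed

section \<open>Restricting the generating set\<close>

fun lsub :: "'a set \<Rightarrow> 'a lterm \<Rightarrow> 'a lterm" where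
  "lsub Y (LVar y) = (if y \<in> Y then LVar y else LZero)"
| "lsub Y LZero = LZero"
| "lsub Y (LAdd a b) = LAdd (lsub Y a) (lsub Y b)"
| "lsub Y (LNeg a) = LNeg (lsub Y a)"
| "lsub Y (LBr a b) = LBr (lsub Y a) (lsub Y b)"

lemma lsub_id: "lvars a \<subseteq> Y \<Longrightarrow> lsub Y a = a"
  by (induction a) auto

lemma lvars_lbr_list: "lvars (lbr_list ys) = set ys"
  by (induction ys rule: lbr_list.induct) auto

lemmas lie_trans_calc[trans] = l_trans

lemma lie_idem_zero:
  assumes "lie_eq Y t (LAdd t t)" shows "lie_eq Y t LZero"
proof -
  have "lie_eq Y LZero (LAdd t (LNeg t))" by (rule l_sym, rule l_add_neg)
  also have "lie_eq Y \<dots> (LAdd (LAdd t t) (LNeg t))" by (rule l_add_cong[OF assms l_refl])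
  also have "lie_eq Y \<dots> (LAdd t (LAdd t (LNeg t)))" by (rule l_add_assoc)
  also have "lie_eq Y \<dots> (LAdd t LZero)" by (rule l_add_cong[OF l_refl l_add_neg])
  also have "lie_eq Y \<dots> t" by (rule l_add_zero)
  finally show ?thesis by (rule l_sym)
qed

lemma lie_br_zero_r: "lie_eq Y (LBr x LZero) LZero"
proof (rule lie_idem_zero)
  have "lie_eq Y (LBr x LZero) (LBr x (LAdd LZero LZero))"
    by (rule l_br_cong[OF l_refl l_sym[OF l_add_zero]])
  also have "lie_eq Y \<dots> (LAdd (LBr x LZero) (LBr x LZero))" by (rule l_br_addr)
  finally show "lie_eq Y (LBr x LZero) (LAdd (LBr x LZero) (LBr x LZero))" .
qed

lemma lie_br_zero_l: "lie_eq Y (LBr LZero x) LZero"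
proof (rule lie_idem_zero)
  have "lie_eq Y (LBr LZero x) (LBr (LAdd LZero LZero) x)"
    by (rule l_br_cong[OF l_sym[OF l_add_zero] l_refl])
  also have "lie_eq Y \<dots> (LAdd (LBr LZero x) (LBr LZero x))" by (rule l_br_addl)
  finally show "lie_eq Y (LBr LZero x) (LAdd (LBr LZero x) (LBr LZero x))" .
qed

lemma lsub_lbr: "\<not> set ys \<subseteq> Y \<Longrightarrow> lie_eq Y (lsub Y (lbr_list ys)) LZero"
proof (induction ys rule: lbr_list.induct)
  case (2 a)
  then show ?case by (simp add: l_refl)
next
  case (3 a b v)
  show ?case
  proof (cases "a \<in> Y")
    case True
    then have "lie_eq Y (lsub Y (lbr_list (b # v))) LZero" using 3 by (intro "3.IH") auto
    then have "lie_eq Y (LBr (LVar a) (lsub Y (lbr_list (b # v)))) (LBr (LVar a) LZero)"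
      by (rule l_br_cong[OF l_refl])
    then show ?thesis using True by simp (rule l_trans[OF _ lie_br_zero_r])
  next
    case False
    then show ?thesis by (simp add: lie_br_zero_l)
  qed
qed simp

lemma lie_subst: "lie_eq Z a b \<Longrightarrow> lie_eq Y (lsub Y a) (lsub Y b)"
proof (induction rule: lie_eq.induct)
  case (l_rel s ys)
  show ?case
  proof (cases "set ys \<subseteq> Y")
    case True
    then have "ys \<in> Delta s Y" using l_rel(2) by (auto simp: Delta_def)
    have "lie_eq Y (lbr_list ys) LZero" using l_rel(1) \<open>ys \<in> Delta s Y\<close> by (rule lie_eq.l_rel)
    then show ?thesis using True by (simp add: lsub_id lvars_lbr_list)
  next
    case False
    then show ?thesis by (simp add: lsub_lbr)
  qed
next
  case (l_sym a b) then show ?case by (meson lie_eq.l_sym)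
next
  case (l_trans a b c) then show ?case by (meson lie_eq.l_trans)
next
  case (l_add_cong a a' b b') then show ?case by (simp add: lie_eq.l_add_cong)
next
  case (l_neg_cong a a') then show ?case by (simp add: lie_eq.l_neg_cong)
next
  case (l_br_cong a a' b b') then show ?case by (simp add: lie_eq.l_br_cong)
qed (simp_all add: lie_eq.l_refl lie_eq.l_add_assoc lie_eq.l_add_comm lie_eq.l_add_zero
  lie_eq.l_add_neg lie_eq.l_br_addl lie_eq.l_br_addr lie_eq.l_alt lie_eq.l_jacobi)

theorem proposition2p7:
  fixes Y :: "'a set" and a b :: "'a lterm"
  assumes "lvars a \<subseteq> Y" and "lvars b \<subseteq> Y"
    and "ring_eq Y (lie_to_ring a) (lie_to_ring b)"
  shows "lie_eq Y a b"
proof -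
  have "Lop (lie_to_ring a) = Lop (lie_to_ring b)" using assms(3) by (rule ring_sound)
  then have e: "lsem (abs_RL a) = lsem (abs_RL b)" by (simp only: lsem.abs_eq)
  have ls: "lsem (abs_RL a - abs_RL b) = 0" unfolding diff_conv_add_uminus lsem_add lsem_neg e by simp
  have "inV (abs_RL a - abs_RL b)"
    unfolding diff_conv_add_uminus by (intro inV_add inV_neg span)
  then have "inN (abs_RL a - abs_RL b)" by (rule inN_inV)
  then obtain L where L: "abs_RL a - abs_RL b = V L" "\<forall>(s, x) \<in> set L. normw x"
    unfolding inN_def by blast
  have "\<forall>u. cntw u L = 0"
  proof
    fix u :: "'a list"
    show "cntw u L = 0"
    proof (cases "normw u")
      case True
      then have "cntw u L = lsem (V L) u" using lsem_V[OF True L(2)] by simp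
      moreover have "lsem (V L) = 0" using ls L(1) by simp
      ultimately show ?thesis by simp
    next
      case False
      then show ?thesis using L(2) by (intro cntw_notin) auto
    qed
  qed
  then have "V L = 0" by (rule cancel)
  then have "abs_RL a - abs_RL b = 0" using L(1) by simp
  then have "abs_RL a = abs_RL b" by simp
  then have "lie_eq UNIV a b" by (simp only: RL.abs_eq_iff)
  then have "lie_eq Y (lsub Y a) (lsub Y b)" by (rule lie_subst)
  then show ?thesis using assms(1,2) by (simp add: lsub_id)
qed

end
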